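(* Let $\mathfrak g$ be a finite-dimensional Lie algebra over a field $\mathbb K$ of characteristic zero, $\mathfrak h\subset\mathfrak g$ an ideal, and $f$ a polynomial function on $\mathfrak g^*$ such that $f(x+l)=f(x)$ for all $x\in\mathfrak g^*$ and all $l\in\mathrm{St}(\pi(x))^\perp$. Then $f\in\operatorname{Ann}(\mathfrak h)$.
   Context: $\pi:\mathfrak g^*\to\mathfrak h^*$ is restriction. For $h\in\mathfrak h^*$, $\mathrm{St}(h)=\{\xi\in\mathfrak g\mid\langle h,[\xi,\eta]\rangle=0\ \forall\eta\in\mathfrak h\}$, and $\mathrm{St}(h)^\perp=\{l\in\mathfrak g^*\mid\langle l,\xi\rangle=0\ \forall\xi\in\mathrm{St}(h)\}$. $S(\mathfrak g)$ is the polynomial algebra on $\mathfrak g^*$ with Lie–Poisson bracket $\{f,g\}(x)=\langle x,[df(x),dg(x)]\rangle$, and $\operatorname{Ann}(\mathfrak h)=\{f\in S(\mathfrak g)\mid\{f,\eta\}=0\ \forall\eta\in\mathfrak h\}$. *)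

theory Defs
  imports "HOL-Computational_Algebra.Polynomial"
begin

text \<open>The dual g* is identified with
  'n \<Rightarrow> 'a via the pairing below (dual basis).\<close>

definition pair :: "('n::finite \<Rightarrow> 'a::field) \<Rightarrow> ('n \<Rightarrow> 'a) \<Rightarrow> 'a" where
  "pair x \<xi> = (\<Sum>i\<in>UNIV. x i * \<xi> i)"

definition lie_algebra :: "(('n::finite \<Rightarrow> 'a::field) \<Rightarrow> ('n \<Rightarrow> 'a) \<Rightarrow> ('n \<Rightarrow> 'a)) \<Rightarrow> bool" where
  "lie_algebra br \<longleftrightarrow>
     (\<forall>a \<xi> \<eta> \<zeta>. br (\<lambda>i. a * \<xi> i + \<eta> i) \<zeta> = (\<lambda>k. a * br \<xi> \<zeta> k + br \<eta> \<zeta> k)) \<and>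
     (\<forall>a \<xi> \<eta> \<zeta>. br \<zeta> (\<lambda>i. a * \<xi> i + \<eta> i) = (\<lambda>k. a * br \<zeta> \<xi> k + br \<zeta> \<eta> k)) \<and>
     (\<forall>\<xi>. br \<xi> \<xi> = (\<lambda>k. 0)) \<and>
     (\<forall>\<xi> \<eta> \<zeta>. (\<lambda>k. br \<xi> (br \<eta> \<zeta>) k + br \<eta> (br \<zeta> \<xi>) k + br \<zeta> (br \<xi> \<eta>) k) = (\<lambda>k. 0))"

definition lie_ideal :: "(('n::finite \<Rightarrow> 'a::field) \<Rightarrow> ('n \<Rightarrow> 'a) \<Rightarrow> ('n \<Rightarrow> 'a)) \<Rightarrow> ('n \<Rightarrow> 'a) set \<Rightarrow> bool" where
  "lie_ideal br h \<longleftrightarrow>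
     (\<lambda>k. 0) \<in> h \<and>
     (\<forall>a \<xi> \<eta>. \<xi> \<in> h \<longrightarrow> \<eta> \<in> h \<longrightarrow> (\<lambda>i. a * \<xi> i + \<eta> i) \<in> h) \<and>
     (\<forall>\<xi> \<eta>. \<eta> \<in> h \<longrightarrow> br \<xi> \<eta> \<in> h)"

text \<open>Restriction map pi : g* \<rightarrow> h*; elements of h* are functionals on h
  (value undefined outside h).\<close>
definition restr :: "('n::finite \<Rightarrow> 'a::field) set \<Rightarrow> ('n \<Rightarrow> 'a) \<Rightarrow> (('n \<Rightarrow> 'a) \<Rightarrow> 'a)" where
  "restr h x = (\<lambda>\<zeta>. if \<zeta> \<in> h then pair x \<zeta> else undefined)"

definition St :: "(('n::finite \<Rightarrow> 'a::field) \<Rightarrow> ('n \<Rightarrow> 'a) \<Rightarrow> ('n \<Rightarrow> 'a)) \<Rightarrow> ('n \<Rightarrow> 'a) set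
                   \<Rightarrow> (('n \<Rightarrow> 'a) \<Rightarrow> 'a) \<Rightarrow> ('n \<Rightarrow> 'a) set" where
  "St br h hf = {\<xi>. \<forall>\<eta>\<in>h. hf (br \<xi> \<eta>) = 0}"

definition perp :: "('n::finite \<Rightarrow> 'a::field) set \<Rightarrow> ('n \<Rightarrow> 'a) set" where
  "perp S = {l. \<forall>\<xi>\<in>S. pair l \<xi> = 0}"

inductive_set poly_fun :: "(('n::finite \<Rightarrow> 'a::field) \<Rightarrow> 'a) set" where
  const: "(\<lambda>x. c) \<in> poly_fun"
| coord: "(\<lambda>x. x i) \<in> poly_fun"
| add: "f \<in> poly_fun \<Longrightarrow> g \<in> poly_fun \<Longrightarrow> (\<lambda>x. f x + g x) \<in> poly_fun"
| mult: "f \<in> poly_fun \<Longrightarrow> g \<in> poly_fun \<Longrightarrow> (\<lambda>x. f x * g x) \<in> poly_fun"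

text \<open>Directional derivative of a polynomial function: the linear coefficient
  of the (unique, as K is infinite) univariate polynomial t \<mapsto> f(x + t v).\<close>
definition dir_deriv :: "(('n::finite \<Rightarrow> 'a::field_char_0) \<Rightarrow> 'a) \<Rightarrow> ('n \<Rightarrow> 'a) \<Rightarrow> ('n \<Rightarrow> 'a) \<Rightarrow> 'a" where
  "dir_deriv f x v = coeff (THE p. \<forall>t. poly p t = f (\<lambda>i. x i + t * v i)) 1"

text \<open>Differential df(x) \<in> g = (g*)*, in coordinates.\<close>
definition differential :: "(('n::finite \<Rightarrow> 'a::field_char_0) \<Rightarrow> 'a) \<Rightarrow> ('n \<Rightarrow> 'a) \<Rightarrow> ('n \<Rightarrow> 'a)" where
  "differential f x = (\<lambda>i. dir_deriv f x (\<lambda>j. if j = i then 1 else 0))"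

definition poisson :: "(('n::finite \<Rightarrow> 'a::field_char_0) \<Rightarrow> ('n \<Rightarrow> 'a) \<Rightarrow> ('n \<Rightarrow> 'a))
     \<Rightarrow> (('n \<Rightarrow> 'a) \<Rightarrow> 'a) \<Rightarrow> (('n \<Rightarrow> 'a) \<Rightarrow> 'a) \<Rightarrow> ('n \<Rightarrow> 'a) \<Rightarrow> 'a" where
  "poisson br f g x = pair x (br (differential f x) (differential g x))"

text \<open>Ann(h): polynomial functions Poisson-commuting with every \<eta> \<in> h
  (\<eta> viewed as the linear function x \<mapsto> <x,\<eta>> on g*).\<close>
definition Ann :: "(('n::finite \<Rightarrow> 'a::field_char_0) \<Rightarrow> ('n \<Rightarrow> 'a) \<Rightarrow> ('n \<Rightarrow> 'a))
     \<Rightarrow> ('n \<Rightarrow> 'a) set \<Rightarrow> (('n \<Rightarrow> 'a) \<Rightarrow> 'a) set" where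
  "Ann br h = {f \<in> poly_fun. \<forall>\<eta>\<in>h. \<forall>x. poisson br f (\<lambda>y. pair y \<eta>) x = 0}"

end

theory Submission
  imports Defs
begin

definition ev :: "'n \<Rightarrow> 'n \<Rightarrow> 'a::field" where
  "ev i = (\<lambda>k. if k = i then 1 else 0)"

lemma delta_gen:
  assumes "\<And>i. P i = (if i = j then c else 0)"
  shows "(\<Sum>i\<in>(UNIV::'n::finite set). P i) = (c :: 'a::comm_monoid_add)"
proof -
  have "(\<Sum>i\<in>(UNIV::'n set). P i) = (\<Sum>i\<in>(UNIV::'n set). if i = j then c else 0)"
    using assms by simp
  also have "\<dots> = c" by (subst sum.delta) auto
  finally show ?thesis .
qed

lemma the_poly:
  fixes p :: "'a::field_char_0 poly"
  assumes "\<forall>t. poly p t = F t"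
  shows "(THE q. \<forall>t. poly q t = F t) = p"
proof (rule the_equality)
  show "\<forall>t. poly p t = F t" by fact
  fix q :: "'a poly" assume "\<forall>t. poly q t = F t"
  then have "poly q = poly p" using assms by auto
  then show "q = p" by (simp add: poly_eq_poly_eq_iff)
qed

lemma grad_exists:
  fixes f :: "('n::finite \<Rightarrow> 'a::field_char_0) \<Rightarrow> 'a"
  assumes "f \<in> poly_fun"
  shows "\<exists>g. \<forall>x v. \<exists>p. (\<forall>t. poly p t = f (\<lambda>i. x i + t * v i)) \<and>
                     coeff p 1 = (\<Sum>i\<in>UNIV. v i * g x i)"
  using assms
proof induction
  case (const c)
  show ?case
    by (rule exI[of _ "\<lambda>x i. 0"], intro allI, rule exI[of _ "[:c:]"], simp)
next
  case (coord j)
  show ?case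
  proof (rule exI[of _ "\<lambda>x i. if i = j then 1 else 0"], intro allI)
    fix x v
    have D: "(\<Sum>i\<in>UNIV. (v::'n \<Rightarrow> 'a) i * (if i = j then 1 else 0)) = v j"
      by (rule delta_gen[where j=j]) simp
    show "\<exists>p. (\<forall>t. poly p t = x j + t * v j) \<and>
            coeff p 1 = (\<Sum>i\<in>UNIV. v i * (if i = j then 1 else 0))"
      by (rule exI[of _ "[:x j, v j:]"]) (simp add: D)
  qed
next
  case (add f1 f2)
  then obtain g1 g2 where g1: "\<forall>x v. \<exists>p. (\<forall>t. poly p t = f1 (\<lambda>i. x i + t * v i)) \<and>
                     coeff p 1 = (\<Sum>i\<in>UNIV. v i * g1 x i)"
    and g2: "\<forall>x v. \<exists>p. (\<forall>t. poly p t = f2 (\<lambda>i. x i + t * v i)) \<and>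
                     coeff p 1 = (\<Sum>i\<in>UNIV. v i * g2 x i)" by blast
  show ?case
  proof (rule exI[of _ "\<lambda>x i. g1 x i + g2 x i"], intro allI)
    fix x v
    obtain p1 where p1: "\<forall>t. poly p1 t = f1 (\<lambda>i. x i + t * v i)"
      "coeff p1 1 = (\<Sum>i\<in>UNIV. v i * g1 x i)" using g1 by blast
    obtain p2 where p2: "\<forall>t. poly p2 t = f2 (\<lambda>i. x i + t * v i)"
      "coeff p2 1 = (\<Sum>i\<in>UNIV. v i * g2 x i)" using g2 by blast
    show "\<exists>p. (\<forall>t. poly p t = f1 (\<lambda>i. x i + t * v i) + f2 (\<lambda>i. x i + t * v i)) \<and>
            coeff p 1 = (\<Sum>i\<in>UNIV. v i * (g1 x i + g2 x i))"
      using p1 p2 by (intro exI[of _ "p1 + p2"]) (simp add: distrib_left sum.distrib)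
  qed
next
  case (mult f1 f2)
  then obtain g1 g2 where g1: "\<forall>x v. \<exists>p. (\<forall>t. poly p t = f1 (\<lambda>i. x i + t * v i)) \<and>
                     coeff p 1 = (\<Sum>i\<in>UNIV. v i * g1 x i)"
    and g2: "\<forall>x v. \<exists>p. (\<forall>t. poly p t = f2 (\<lambda>i. x i + t * v i)) \<and>
                     coeff p 1 = (\<Sum>i\<in>UNIV. v i * g2 x i)" by blast
  show ?case
  proof (rule exI[of _ "\<lambda>x i. f1 x * g2 x i + f2 x * g1 x i"], intro allI)
    fix x v
    obtain p1 where p1: "\<forall>t. poly p1 t = f1 (\<lambda>i. x i + t * v i)"
      "coeff p1 1 = (\<Sum>i\<in>UNIV. v i * g1 x i)" using g1 by blast
    obtain p2 where p2: "\<forall>t. poly p2 t = f2 (\<lambda>i. x i + t * v i)"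
      "coeff p2 1 = (\<Sum>i\<in>UNIV. v i * g2 x i)" using g2 by blast
    have c1: "coeff p1 0 = f1 x" using p1(1)[rule_format, of 0]
      by (simp add: poly_0_coeff_0)
    have c2: "coeff p2 0 = f2 x" using p2(1)[rule_format, of 0]
      by (simp add: poly_0_coeff_0)
    have "coeff (p1 * p2) 1 = coeff p1 0 * coeff p2 1 + coeff p1 1 * coeff p2 0"
      by (simp add: coeff_mult atMost_Suc)
    also have "\<dots> = (\<Sum>i\<in>UNIV. v i * (f1 x * g2 x i + f2 x * g1 x i))"
      using c1 c2 p1 p2 by (simp add: sum_distrib_left sum_distrib_right sum.distrib
          algebra_simps)
    finally show "\<exists>p. (\<forall>t. poly p t = f1 (\<lambda>i. x i + t * v i) * f2 (\<lambda>i. x i + t * v i)) \<and>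
            coeff p 1 = (\<Sum>i\<in>UNIV. v i * (f1 x * g2 x i + f2 x * g1 x i))"
      using p1 p2 by (intro exI[of _ "p1 * p2"]) simp
  qed
qed

lemma dir_deriv_lin:
  fixes f :: "('n::finite \<Rightarrow> 'a::field_char_0) \<Rightarrow> 'a"
  assumes "f \<in> poly_fun"
  shows "dir_deriv f x v = (\<Sum>i\<in>UNIV. v i * differential f x i)"
proof -
  obtain g where g: "\<forall>x v. \<exists>p. (\<forall>t. poly p t = f (\<lambda>i. x i + t * v i)) \<and>
                     coeff p 1 = (\<Sum>i\<in>UNIV. v i * g x i)"
    using grad_exists[OF assms] by blast
  have dd: "dir_deriv f x w = (\<Sum>i\<in>UNIV. w i * g x i)" for w
  proof -
    obtain p where p: "\<forall>t. poly p t = f (\<lambda>i. x i + t * w i)"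
      "coeff p 1 = (\<Sum>i\<in>UNIV. w i * g x i)" using g by blast
    show ?thesis unfolding dir_deriv_def the_poly[OF p(1)] p(2) ..
  qed
  have "differential f x i = g x i" for i
    unfolding differential_def dd by (auto intro!: delta_gen)
  then show ?thesis by (simp add: dd)
qed

lemma br_zero:
  fixes br :: "('n::finite \<Rightarrow> 'a::field) \<Rightarrow> ('n \<Rightarrow> 'a) \<Rightarrow> ('n \<Rightarrow> 'a)"
  assumes "lie_algebra br"
  shows "br (\<lambda>k. 0) z = (\<lambda>k. 0)"
proof -
  have L: "\<And>a \<xi> \<eta> \<zeta>. br (\<lambda>i. a * \<xi> i + \<eta> i) \<zeta> = (\<lambda>k. a * br \<xi> \<zeta> k + br \<eta> \<zeta> k)"
    using assms unfolding lie_algebra_def by blast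
  have "br (\<lambda>k. 0) z = (\<lambda>k. br (\<lambda>k. 0) z k + br (\<lambda>k. 0) z k)"
    using L[of 1 "\<lambda>k. 0" "\<lambda>k. 0" z] by simp
  then have "\<And>k. br (\<lambda>k. 0) z k = br (\<lambda>k. 0) z k + br (\<lambda>k. 0) z k"
    by (metis (no_types))
  then have "\<And>k. br (\<lambda>k. 0) z k = 0" by (metis add_cancel_right_right)
  then show ?thesis by (auto simp: fun_eq_iff)
qed

lemma br_sum:
  fixes br :: "('n::finite \<Rightarrow> 'a::field) \<Rightarrow> ('n \<Rightarrow> 'a) \<Rightarrow> ('n \<Rightarrow> 'a)"
  assumes "lie_algebra br" "finite S"
  shows "br (\<lambda>k. \<Sum>i\<in>S. c i * u i k) z = (\<lambda>k. \<Sum>i\<in>S. c i * br (u i) z k)"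
  using assms(2)
proof induction
  case empty
  then show ?case using br_zero[OF assms(1)] by simp
next
  case (insert j S)
  have "br (\<lambda>k. \<Sum>i\<in>insert j S. c i * u i k) z
      = br (\<lambda>k. c j * u j k + (\<Sum>i\<in>S. c i * u i k)) z"
    using insert by simp
  also have "\<dots> = (\<lambda>k. c j * br (u j) z k + br (\<lambda>k. \<Sum>i\<in>S. c i * u i k) z k)"
  proof -
    have L: "\<And>a \<xi> \<eta> \<zeta>. br (\<lambda>i. a * \<xi> i + \<eta> i) \<zeta> = (\<lambda>k. a * br \<xi> \<zeta> k + br \<eta> \<zeta> k)"
      using assms(1) unfolding lie_algebra_def by blast
    show ?thesis using L[of "c j" "u j" "\<lambda>k. \<Sum>i\<in>S. c i * u i k" z] by simp
  qed
  also have "\<dots> = (\<lambda>k. \<Sum>i\<in>insert j S. c i * br (u i) z k)"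
    using insert by simp
  finally show ?case .
qed

lemma decomp:
  fixes \<xi> :: "'n::finite \<Rightarrow> 'a::field"
  shows "\<xi> = (\<lambda>k. \<Sum>i\<in>UNIV. \<xi> i * ev i k)"
  by (rule ext, rule sym) (auto intro!: delta_gen simp: ev_def)

lemma pair_br:
  fixes br :: "('n::finite \<Rightarrow> 'a::field) \<Rightarrow> ('n \<Rightarrow> 'a) \<Rightarrow> ('n \<Rightarrow> 'a)"
  assumes "lie_algebra br"
  shows "pair x (br \<xi> \<eta>) = (\<Sum>i\<in>UNIV. \<xi> i * pair x (br (ev i) \<eta>))"
proof -
  have "br \<xi> \<eta> = (\<lambda>k. \<Sum>i\<in>UNIV. \<xi> i * br (ev i) \<eta> k)"
    using br_sum[OF assms, of UNIV \<xi> ev \<eta>] decomp[of \<xi>] by simp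
  then have "pair x (br \<xi> \<eta>) = (\<Sum>k\<in>UNIV. x k * (\<Sum>i\<in>UNIV. \<xi> i * br (ev i) \<eta> k))"
    by (simp add: pair_def)
  also have "\<dots> = (\<Sum>k\<in>UNIV. \<Sum>i\<in>UNIV. \<xi> i * (x k * br (ev i) \<eta> k))"
    by (simp add: sum_distrib_left mult.left_commute)
  also have "\<dots> = (\<Sum>i\<in>UNIV. \<Sum>k\<in>UNIV. \<xi> i * (x k * br (ev i) \<eta> k))"
    by (rule sum.swap)
  also have "\<dots> = (\<Sum>i\<in>UNIV. \<xi> i * pair x (br (ev i) \<eta>))"
    by (simp add: pair_def sum_distrib_left)
  finally show ?thesis .
qed

lemma diff_linear:
  fixes \<eta> :: "'n::finite \<Rightarrow> 'a::field_char_0"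
  shows "differential (\<lambda>y. pair y \<eta>) x = \<eta>"
proof
  fix i
  have "\<forall>t. poly [:pair x \<eta>, pair (ev i) \<eta>:] t
          = pair (\<lambda>j. x j + t * (if j = i then 1 else 0)) \<eta>"
    by (simp add: pair_def ev_def distrib_right sum.distrib sum_distrib_left mult.assoc)
  note P = the_poly[OF this]
  have "(\<Sum>j\<in>UNIV. (if j = i then 1 else 0) * \<eta> j) = \<eta> i"
    by (auto intro!: delta_gen)
  then show "differential (\<lambda>y. pair y \<eta>) x i = \<eta> i"
    unfolding differential_def dir_deriv_def P by (simp add: pair_def ev_def)
qed

theorem corollary2:
  fixes br :: "('n::finite \<Rightarrow> 'a::field_char_0) \<Rightarrow> ('n \<Rightarrow> 'a) \<Rightarrow> ('n \<Rightarrow> 'a)"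
    and h :: "('n \<Rightarrow> 'a) set"
    and f :: "('n \<Rightarrow> 'a) \<Rightarrow> 'a"
  assumes "lie_algebra br"
    and "lie_ideal br h"
    and "f \<in> poly_fun"
    and "\<forall>x l. l \<in> perp (St br h (restr h x)) \<longrightarrow> f (\<lambda>i. x i + l i) = f x"
  shows "f \<in> Ann br h"
  unfolding Ann_def
proof (intro CollectI conjI ballI allI)
  show "f \<in> poly_fun" by fact
  fix \<eta> x assume eta: "\<eta> \<in> h"
  define w where "w = (\<lambda>i. pair x (br (ev i) \<eta>))"
  have wperp: "(\<lambda>i. t * w i) \<in> perp (St br h (restr h x))" for t
    unfolding perp_def
  proof (intro CollectI ballI)
    fix \<xi> assume "\<xi> \<in> St br h (restr h x)"
    then have "restr h x (br \<xi> \<eta>) = 0" using eta unfolding St_def by blast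
    moreover have "br \<xi> \<eta> \<in> h" using assms(2) eta unfolding lie_ideal_def by blast
    ultimately have "pair x (br \<xi> \<eta>) = 0" unfolding restr_def by simp
    then have "(\<Sum>i\<in>UNIV. \<xi> i * w i) = 0" using pair_br[OF assms(1)] w_def by metis
    then have "t * (\<Sum>i\<in>UNIV. \<xi> i * w i) = 0" by simp
    then show "pair (\<lambda>i. t * w i) \<xi> = 0"
      by (simp add: pair_def sum_distrib_left algebra_simps)
  qed
  have "\<forall>t. poly [:f x:] t = f (\<lambda>i. x i + t * w i)"
    using assms(4) wperp by auto
  note P = the_poly[OF this]
  have "dir_deriv f x w = 0"
    unfolding dir_deriv_def P by simp
  then have "(\<Sum>i\<in>UNIV. w i * differential f x i) = 0"
    using dir_deriv_lin[OF assms(3)] by simp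
  then have "pair x (br (differential f x) \<eta>) = 0"
    using pair_br[OF assms(1), of x "differential f x" \<eta>] w_def
    by (simp add: mult.commute)
  then show "poisson br f (\<lambda>y. pair y \<eta>) x = 0"
    unfolding poisson_def diff_linear .
qed

end
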